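(* Let $N\ge1$, let $a_1,\dots,a_N\ge 0$, let $b_1,\dots,b_N>0$ be pairwise distinct, set $a=\sum_{j=1}^Na_j$, and let $u_0\in\mathbb{R}$. Let $p(t)=(u(t),v_1(t),\dots,v_N(t))$ be the solution of $$\dot u=-a u+b_1v_1,\quad \dot v_j=a_ju-b_jv_j+b_{j+1}v_{j+1}\ (1\le j\le N-1),\quad \dot v_N=a_Nu-b_Nv_N,$$ with $p(0)=(u_0,0,\dots,0)$. Then $u$ solves the memory equation $$\dot u(t)=-a\,u(t)+\int_0^tK(t-s)u(s)\,ds,\qquad u(0)=u_0,$$ where $K(t)=\sum_{j=1}^Na_jK_j(t)$ with $K_j(t)=\sum_{i=1}^j b_i\psi_i^je^{-b_it}$ and $\psi_i^j=\prod_{k=1,k\neq i}^j\frac{b_k}{b_k-b_i}$. Moreover $a=k(0)$ where $k$ is the Laplace transform of $K$, each $K_j(t)\ge0$ and hence $K(t)\ge 0$ for all $t\ge0$, and $u(t)\to u_0/Z$ as $t\to\infty$, where $$Z=1+\sum_{i=1}^N\frac1{b_i}\sum_{j=i}^Na_j.$$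
   Context: The system is $\dot p=A^*p$ where $A^*$ is the $(N+1)\times(N+1)$ matrix with first row $(-a,b_1,0,\dots,0)$, and for $j=1,\dots,N$ the row $j$ (indexing rows from $0$) has entry $a_j$ in column $0$, $-b_j$ on the diagonal and $b_{j+1}$ in column $j+1$ (if $j<N$), all other entries zero. It is the transpose of a Markov generator (nonnegative off-diagonal entries, zero column sums). The Laplace transform is $k(\lambda)=\int_0^\infty e^{-\lambda t}K(t)\,dt$; one has $k(\lambda)=\sum_j a_j\prod_{i=1}^j\frac{b_i}{\lambda+b_i}$. *)

theory Defs
  imports "HOL-Analysis.Analysis"
begin

definition psi :: "(nat \<Rightarrow> real) \<Rightarrow> nat \<Rightarrow> nat \<Rightarrow> real" where
  "psi b i j = (\<Prod>k\<in>{1..j} - {i}. b k / (b k - b i))"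

definition Kj :: "(nat \<Rightarrow> real) \<Rightarrow> nat \<Rightarrow> real \<Rightarrow> real" where
  "Kj b j t = (\<Sum>i=1..j. b i * psi b i j * exp (- b i * t))"

definition Kmem :: "nat \<Rightarrow> (nat \<Rightarrow> real) \<Rightarrow> (nat \<Rightarrow> real) \<Rightarrow> real \<Rightarrow> real" where
  "Kmem N a b t = (\<Sum>j=1..N. a j * Kj b j t)"

definition laplace :: "(real \<Rightarrow> real) \<Rightarrow> real \<Rightarrow> real" where
  "laplace K lam = integral {0..} (\<lambda>t. exp (- lam * t) * K t)"

end

theory Submission
  imports Defs "HOL-Real_Asymp.Real_Asymp"
begin

definition psiS :: "(nat \<Rightarrow> real) \<Rightarrow> nat set \<Rightarrow> nat \<Rightarrow> real" where
  "psiS b S i = (\<Prod>k\<in>S - {i}. b k / (b k - b i))"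

lemma psiS_insert:
  assumes "finite S" "j \<notin> S" "i \<in> S"
  shows "psiS b (insert j S) i = psiS b S i * (b j / (b j - b i))"
proof -
  have "insert j S - {i} = insert j (S - {i})" using assms by auto
  then show ?thesis using assms unfolding psiS_def by (simp add: mult.commute)
qed

lemma psiS_insert_self:
  assumes "j \<notin> S"
  shows "psiS b (insert j S) j = (\<Prod>k\<in>S. b k / (b k - b j))"
  using assms unfolding psiS_def by (metis Diff_insert_absorb)

lemma pf_aux:
  fixes p x y l :: real
  assumes "y - x \<noteq> 0" "l + x \<noteq> 0" "l + y \<noteq> 0"
  shows "p * (x / (x - y)) * (y / (l + y)) + p * (y / (y - x)) * (x / (l + x)) = p * (x / (l + x)) * (y / (l + y))"
proof -
  have a: "x - y \<noteq> 0" using assms by simp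
  have e: "y / (y - x) = - (y / (x - y))" by (metis minus_diff_eq minus_divide_right)
  have "p * (x / (x - y)) * (y / (l + y)) + p * (y / (y - x)) * (x / (l + x))
     = p * x * y / (x - y) * (1/(l+y) - 1/(l+x))"
    unfolding e by (simp add: algebra_simps)
  also have "1/(l+y) - 1/(l+x) = (x - y)/((l+x)*(l+y))"
    using assms by (simp add: divide_simps)
  finally show ?thesis using a by simp
qed

lemma partial_fractions:
  assumes "finite S" "S \<noteq> {}" "inj_on b S" "\<forall>k\<in>S. lam + b k \<noteq> 0"
  shows "(\<Prod>k\<in>S. b k / (lam + b k)) = (\<Sum>i\<in>S. psiS b S i * (b i / (lam + b i)))"
  using assms(1,2,3,4)
proof (induction S arbitrary: lam rule: finite_ne_induct)
  case (singleton j)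
  then show ?case by (simp add: psiS_def)
next
  case (insert j S)
  have inj: "inj_on b S" using insert.prems by (simp add: inj_on_insert)
  have bne: "\<And>i. i \<in> S \<Longrightarrow> b i \<noteq> b j" using insert.prems insert.hyps by (auto simp: inj_on_insert image_iff)
  have ne: "\<forall>k\<in>S. lam + b k \<noteq> 0" "lam + b j \<noteq> 0" using insert.prems by auto
  have IH: "(\<Prod>k\<in>S. b k / (lam + b k)) = (\<Sum>i\<in>S. psiS b S i * (b i / (lam + b i)))"
    using insert.IH[OF inj ne(1)] .
  have IH2: "(\<Prod>k\<in>S. b k / (- b j + b k)) = (\<Sum>i\<in>S. psiS b S i * (b i / (- b j + b i)))"
  proof (rule insert.IH[OF inj], rule ballI)
    fix k assume "k \<in> S" then have "b k \<noteq> b j" using bne by blast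
    then show "- b j + b k \<noteq> 0" by linarith
  qed
  have self: "psiS b (insert j S) j = (\<Sum>i\<in>S. psiS b S i * (b i / (b i - b j)))"
  proof -
    have "psiS b (insert j S) j = (\<Prod>k\<in>S. b k / (- b j + b k))"
      unfolding psiS_insert_self[OF insert.hyps(3), of b] by (rule prod.cong) auto
    also have "\<dots> = (\<Sum>i\<in>S. psiS b S i * (b i / (- b j + b i)))" by (rule IH2)
    also have "\<dots> = (\<Sum>i\<in>S. psiS b S i * (b i / (b i - b j)))" by (rule sum.cong) auto
    finally show ?thesis .
  qed
  have "(\<Sum>i\<in>insert j S. psiS b (insert j S) i * (b i / (lam + b i)))
      = psiS b (insert j S) j * (b j / (lam + b j)) + (\<Sum>i\<in>S. psiS b (insert j S) i * (b i / (lam + b i)))"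
    by (rule sum.insert[OF insert.hyps(1,3)])
  also have "\<dots> = (\<Sum>i\<in>S. psiS b S i * (b i / (b i - b j))) * (b j / (lam + b j)) 
        + (\<Sum>i\<in>S. psiS b S i * (b j / (b j - b i)) * (b i / (lam + b i)))"
    unfolding self using psiS_insert[OF insert.hyps(1,3)] by (intro arg_cong2[where f="(+)"] refl sum.cong) auto
  also have "\<dots> = (\<Sum>i\<in>S. psiS b S i * (b i / (lam + b i)) * (b j / (lam + b j)))"
    unfolding sum_distrib_right sum.distrib[symmetric]
  proof (rule sum.cong[OF refl])
    fix i assume i: "i \<in> S"
    have d: "b j - b i \<noteq> 0" using bne[OF i] by auto
    have l: "lam + b i \<noteq> 0" using ne i by auto
    show "psiS b S i * (b i / (b i - b j)) * (b j / (lam + b j)) + psiS b S i * (b j / (b j - b i)) * (b i / (lam + b i)) =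
          psiS b S i * (b i / (lam + b i)) * (b j / (lam + b j))"
      using pf_aux[OF d l ne(2)] by simp
  qed
  also have "\<dots> = (\<Sum>i\<in>S. psiS b S i * (b i / (lam + b i))) * (b j / (lam + b j))"
    by (simp only: sum_distrib_right mult.assoc)
  also have "\<dots> = (\<Prod>k\<in>insert j S. b k / (lam + b k))"
    using insert.hyps by (simp add: IH sum_distrib_right[symmetric] mult.commute)
  finally show ?case by simp
qed

lemma psiS_sum1:
  assumes "finite S" "S \<noteq> {}" "inj_on b S" "\<forall>k\<in>S. b k > 0"
  shows "(\<Sum>i\<in>S. psiS b S i) = 1"
proof -
  have "(\<Prod>k\<in>S. b k / (0 + b k)) = (\<Sum>i\<in>S. psiS b S i * (b i / (0 + b i)))"
    using assms by (intro partial_fractions) auto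
  moreover have "(\<Prod>k\<in>S. b k / (0 + b k)) = 1" using assms by (intro prod.neutral) auto
  moreover have "(\<Sum>i\<in>S. psiS b S i * (b i / (0 + b i))) = (\<Sum>i\<in>S. psiS b S i)"
    using assms by (intro sum.cong) auto
  ultimately show ?thesis by simp
qed

lemma lim_l1: "((\<lambda>lam::real. lam / (lam + c)) \<longlongrightarrow> 1) at_top" by real_asymp
lemma lim_l2: "((\<lambda>lam::real. d / (lam + c)) \<longlongrightarrow> 0) at_top" by real_asymp

lemma psiS_sum2:
  assumes "finite S" "card S \<ge> 2" "inj_on b S" "\<forall>k\<in>S. b k > 0"
  shows "(\<Sum>i\<in>S. b i * psiS b S i) = 0"
proof -
  have ne: "S \<noteq> {}" using assms by auto
  then obtain j where j: "j \<in> S" by blast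
  define S' where "S' = S - {j}"
  have cS: "card S' = card S - 1" using assms(1) j by (simp add: S'_def card_Diff_singleton)
  have S': "S = insert j S'" "j \<notin> S'" "finite S'" "S' \<noteq> {}"
    using j assms cS by (auto simp: S'_def)  (use card_mono[of "{j}" S] in auto)
  have ev: "\<forall>\<^sub>F lam in at_top. (\<Sum>i\<in>S. psiS b S i * b i * (lam / (lam + b i))) = lam * (\<Prod>k\<in>S. b k / (lam + b k))"
    using eventually_gt_at_top[of "0::real"]
  proof eventually_elim
    case (elim lam)
    have "(\<Prod>k\<in>S. b k / (lam + b k)) = (\<Sum>i\<in>S. psiS b S i * (b i / (lam + b i)))"
      using assms ne elim by (intro partial_fractions) (auto simp: add_pos_pos)
    then have "lam * (\<Prod>k\<in>S. b k / (lam + b k)) = (\<Sum>i\<in>S. lam * (psiS b S i * (b i / (lam + b i))))"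
      by (simp add: sum_distrib_left)
    also have "\<dots> = (\<Sum>i\<in>S. psiS b S i * b i * (lam / (lam + b i)))"
      by (rule sum.cong) (auto simp: ac_simps)
    finally show ?case by simp
  qed
  have lim1: "((\<lambda>lam. \<Sum>i\<in>S. psiS b S i * b i * (lam / (lam + b i))) \<longlongrightarrow> (\<Sum>i\<in>S. psiS b S i * b i * 1)) at_top"
    by (rule tendsto_sum, rule tendsto_mult_left, rule lim_l1)
  have lim2: "((\<lambda>lam. lam * (\<Prod>k\<in>S. b k / (lam + b k))) \<longlongrightarrow> b j * 0) at_top"
  proof -
    have eq: "(\<lambda>lam. lam * (\<Prod>k\<in>S. b k / (lam + b k))) = (\<lambda>lam. (b j * (lam / (lam + b j))) * (\<Prod>k\<in>S'. b k / (lam + b k)))"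
    proof (rule ext)
      fix lam :: real
      have "(\<Prod>k\<in>S. b k / (lam + b k)) = b j / (lam + b j) * (\<Prod>k\<in>S'. b k / (lam + b k))"
        using S' by simp
      then show "lam * (\<Prod>k\<in>S. b k / (lam + b k)) = (b j * (lam / (lam + b j))) * (\<Prod>k\<in>S'. b k / (lam + b k))"
        by (simp add: ac_simps)
    qed
    have P0: "((\<lambda>lam. (\<Prod>k\<in>S'. b k / (lam + b k))) \<longlongrightarrow> (\<Prod>k\<in>S'. 0)) at_top"
      by (rule tendsto_prod) (rule lim_l2)
    have z: "(\<Prod>k\<in>S'. (0::real)) = 0" using S' by (simp add: card_gt_0_iff)
    have P: "((\<lambda>lam. (\<Prod>k\<in>S'. b k / (lam + b k))) \<longlongrightarrow> 0) at_top"
      using P0 unfolding z .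
    have L: "((\<lambda>lam. b j * (lam / (lam + b j))) \<longlongrightarrow> b j * 1) at_top"
      by (rule tendsto_mult_left, rule lim_l1)
    have "((\<lambda>lam. (b j * (lam / (lam + b j))) * (\<Prod>k\<in>S'. b k / (lam + b k))) \<longlongrightarrow> (b j * 1) * 0) at_top"
      by (rule tendsto_mult[OF L P])
    then show ?thesis unfolding eq by simp
  qed
  have "((\<lambda>lam. lam * (\<Prod>k\<in>S. b k / (lam + b k))) \<longlongrightarrow> (\<Sum>i\<in>S. psiS b S i * b i * 1)) at_top"
    by (rule Lim_transform_eventually[OF lim1 ev])
  moreover have ne: "(at_top::real filter) \<noteq> bot" by simp
  ultimately have "(\<Sum>i\<in>S. psiS b S i * b i * 1) = b j * 0"
    using tendsto_unique[OF ne _ lim2] by blast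
  then show ?thesis by (simp add: mult.commute)
qed


lemma psi_eq: "psi b i j = psiS b {1..j} i" by (simp add: psi_def psiS_def)

lemma Kj_alt: "Kj b j t = (\<Sum>i=1..j. b i * psiS b {1..j} i * exp (- b i * t))"
  by (simp add: Kj_def psi_eq)

lemma psi_step:
  assumes "i \<in> {1..j}" 
  shows "psiS b {1..Suc j} i = psiS b {1..j} i * (b (Suc j) / (b (Suc j) - b i))"
proof -
  have "{1..Suc j} = insert (Suc j) {1..j}" by auto
  then show ?thesis using psiS_insert[of "{1..j}" "Suc j" i b] assms by simp
qed

lemma Kj_deriv_aux:
  fixes B bi P P' e :: real
  assumes h: "P' * (B - bi) = B * P"
  shows "bi * P' * (e * (- bi)) = - B * (bi * P' * e) + B * (bi * P * e)"
proof -
  have "- B * (bi * P' * e) + B * (bi * P * e) = bi * e * (B * P) - bi * e * (B * P')"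
    by (simp add: algebra_simps)
  also have "\<dots> = bi * e * (P' * (B - bi)) - bi * e * (B * P')" by (simp only: h)
  also have "\<dots> = bi * P' * (e * (- bi))" by (simp add: algebra_simps)
  finally show ?thesis by simp
qed

lemma Kj_deriv_aux2:
  fixes B T SX SY :: real
  shows "(- B * SX + B * SY) + T * (e * (- B)) = - B * (SX + T * e) + B * SY"
  by (simp add: algebra_simps)

lemma Kj_deriv:
  assumes "j \<ge> 1" "inj_on b {1..Suc j}"
  shows "(Kj b (Suc j) has_real_derivative (- b (Suc j) * Kj b (Suc j) t + b (Suc j) * Kj b j t)) (at t)"
proof -
  have d: "(Kj b (Suc j) has_real_derivative (\<Sum>i=1..Suc j. b i * psiS b {1..Suc j} i * (exp (- b i * t) * (- b i)))) (at t)"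
    unfolding Kj_alt[abs_def]
    apply (auto intro!: derivative_eq_intros)
    apply (rule sum.cong)
     apply (auto simp: algebra_simps)
    done
  have "(\<Sum>i=1..Suc j. b i * psiS b {1..Suc j} i * (exp (- b i * t) * (- b i)))
     = (\<Sum>i=1..j. b i * psiS b {1..Suc j} i * (exp (- b i * t) * (- b i)))
       + b (Suc j) * psiS b {1..Suc j} (Suc j) * (exp (- b (Suc j) * t) * (- b (Suc j)))"
    by simp
  also have "(\<Sum>i=1..j. b i * psiS b {1..Suc j} i * (exp (- b i * t) * (- b i)))
     = (\<Sum>i=1..j. - b (Suc j) * (b i * psiS b {1..Suc j} i * exp (- b i * t)) + b (Suc j) * (b i * psiS b {1..j} i * exp (- b i * t)))"
  proof (rule sum.cong[OF refl])
    fix i assume i: "i \<in> {1..j}"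
    show "b i * psiS b {1..Suc j} i * (exp (- b i * t) * (- b i)) =
      - b (Suc j) * (b i * psiS b {1..Suc j} i * exp (- b i * t)) + b (Suc j) * (b i * psiS b {1..j} i * exp (- b i * t))"
    proof -
      have False: "b (Suc j) - b i \<noteq> 0"
      proof
        assume "b (Suc j) - b i = 0"
        then have "b (Suc j) = b i" by simp
        then have "Suc j = i" using assms(2) i by (auto simp: inj_on_def)
        then show False using i by simp
      qed
      have "psiS b {1..Suc j} i * (b (Suc j) - b i) = b (Suc j) * psiS b {1..j} i"
        using psi_step[OF i, of b] False by (simp add: field_simps)
      then show ?thesis by (rule Kj_deriv_aux)
    qed
  qed
  also have "(\<Sum>i=1..j. - b (Suc j) * (b i * psiS b {1..Suc j} i * exp (- b i * t)) + b (Suc j) * (b i * psiS b {1..j} i * exp (- b i * t)))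
     = - b (Suc j) * (\<Sum>i=1..j. b i * psiS b {1..Suc j} i * exp (- b i * t)) + b (Suc j) * (\<Sum>i=1..j. b i * psiS b {1..j} i * exp (- b i * t))"
    by (simp only: sum.distrib sum_distrib_left)
  also have "(- b (Suc j) * (\<Sum>i=1..j. b i * psiS b {1..Suc j} i * exp (- b i * t)) + b (Suc j) * (\<Sum>i=1..j. b i * psiS b {1..j} i * exp (- b i * t)))
     + (b (Suc j) * psiS b {1..Suc j} (Suc j)) * (exp (- b (Suc j) * t) * (- b (Suc j)))
     = - b (Suc j) * ((\<Sum>i=1..j. b i * psiS b {1..Suc j} i * exp (- b i * t)) + (b (Suc j) * psiS b {1..Suc j} (Suc j)) * exp (- b (Suc j) * t))
       + b (Suc j) * (\<Sum>i=1..j. b i * psiS b {1..j} i * exp (- b i * t))"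
    by (rule Kj_deriv_aux2)
  also have "\<dots> = - b (Suc j) * Kj b (Suc j) t + b (Suc j) * Kj b j t"
    by (simp add: Kj_alt)
  finally have "(\<Sum>i=1..Suc j. b i * psiS b {1..Suc j} i * (exp (- b i * t) * (- b i)))
     = - b (Suc j) * Kj b (Suc j) t + b (Suc j) * Kj b j t" .
  then show ?thesis using d by simp
qed

lemma Kj_0:
  assumes "j \<ge> 2" "inj_on b {1..j}" "\<forall>k\<in>{1..j}. b k > 0"
  shows "Kj b j 0 = 0"
  using psiS_sum2[of "{1..j}" b] assms by (simp add: Kj_alt)

lemma Kj_1: "Kj b 1 t = b 1 * exp (- b 1 * t)"
  by (simp add: Kj_alt psiS_def)

lemma Kj_nonneg:
  assumes "j \<ge> 1" "inj_on b {1..j}" "\<forall>k\<in>{1..j}. b k > 0" "t \<ge> 0"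
  shows "Kj b j t \<ge> 0"
  using assms
proof (induction j arbitrary: t rule: dec_induct)
  case base
  then show ?case by (simp add: Kj_alt psiS_def)
next
  case (step j)
  have inj: "inj_on b {1..j}" using step.prems by (auto intro: inj_on_subset)
  have pos: "\<forall>k\<in>{1..j}. b k > 0" using step.prems by auto
  have bpos: "b (Suc j) > 0" using step.prems by auto
  define g where "g t = exp (b (Suc j) * t) * Kj b (Suc j) t" for t
  have gd: "(g has_real_derivative exp (b (Suc j) * x) * (b (Suc j) * Kj b j x)) (at x)" for x
    unfolding g_def using Kj_deriv[OF step.hyps(1) step.prems(1), of x]
    by (auto intro!: derivative_eq_intros simp: algebra_simps)
  have "g 0 \<le> g t"
  proof (rule deriv_nonneg_imp_mono[OF gd])
    fix x assume "x \<in> {0..t}"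
    then have "Kj b j x \<ge> 0" using step.IH[OF inj pos] by auto
    then show "0 \<le> exp (b (Suc j) * x) * (b (Suc j) * Kj b j x)" using bpos by simp
  qed (use step.prems in auto)
  moreover have "g 0 = 0" using Kj_0[of "Suc j" b] step.prems step.hyps by (simp add: g_def)
  ultimately show ?case by (simp add: g_def zero_le_mult_iff)
qed

lemma Kj_integral:
  assumes "j \<ge> 1" "inj_on b {1..j}" "\<forall>k\<in>{1..j}. b k > 0"
  shows "(Kj b j has_integral 1) {0..}"
proof -
  have "((\<lambda>t. \<Sum>i=1..j. b i * psiS b {1..j} i * exp (- b i * t)) has_integral (\<Sum>i=1..j. b i * psiS b {1..j} i * (exp (- b i * 0) / b i))) {0..}"
    using assms by (intro has_integral_sum has_integral_mult_right has_integral_exp_minus_to_infinity) auto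
  moreover have "(\<Sum>i=1..j. b i * psiS b {1..j} i * (exp (- b i * 0) / b i)) = (\<Sum>i=1..j. psiS b {1..j} i)"
  proof (intro sum.cong refl)
    fix x assume "x \<in> {1..j}" then have "b x > 0" using assms by auto
    then show "b x * psiS b {1..j} x * (exp (- b x * 0) / b x) = psiS b {1..j} x" by simp
  qed
  moreover have "(\<Sum>i=1..j. psiS b {1..j} i) = 1" using assms by (intro psiS_sum1) auto
  ultimately have "((\<lambda>t. \<Sum>i=1..j. b i * psiS b {1..j} i * exp (- b i * t)) has_integral 1) {0..}"
    by metis
  moreover have "Kj b j = (\<lambda>t. \<Sum>i=1..j. b i * psiS b {1..j} i * exp (- b i * t))"
    by (rule ext) (rule Kj_alt)
  ultimately show ?thesis by metis
qed

lemma Kmem_integral: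
  assumes "inj_on b {1..N}" "\<forall>k\<in>{1..N}. b k > 0"
  shows "(Kmem N a b has_integral (\<Sum>j=1..N. a j)) {0..}"
proof -
  have "((\<lambda>t. \<Sum>j=1..N. a j * Kj b j t) has_integral (\<Sum>j=1..N. a j * 1)) {0..}"
    using assms by (intro has_integral_sum has_integral_mult_right Kj_integral) (auto intro: inj_on_subset)
  moreover have "Kmem N a b = (\<lambda>t. \<Sum>j=1..N. a j * Kj b j t)"
    by (rule ext) (simp add: Kmem_def)
  ultimately show ?thesis by simp
qed


lemma tri_swap:
  fixes m N :: nat
  shows "(\<Sum>i=m..N. \<Sum>j=i..N. f i j) = (\<Sum>j=m..N. \<Sum>i=m..j. (f i j :: real))"
proof -
  have "(\<Sum>i=m..N. \<Sum>j=i..N. f i j) = (\<Sum>i\<in>{m..N}. \<Sum>j\<in>{y. y \<in> {m..N} \<and> i \<le> y}. f i j)"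
  proof (rule sum.cong[OF refl])
    fix i assume "i \<in> {m..N}"
    then have "{i..N} = {y. y \<in> {m..N} \<and> i \<le> y}" by auto
    then show "(\<Sum>j=i..N. f i j) = (\<Sum>j\<in>{y. y \<in> {m..N} \<and> i \<le> y}. f i j)" by simp
  qed
  also have "\<dots> = (\<Sum>j\<in>{m..N}. \<Sum>i\<in>{x. x \<in> {m..N} \<and> x \<le> j}. f i j)"
    by (rule sum.swap_restrict) auto
  also have "\<dots> = (\<Sum>j=m..N. \<Sum>i=m..j. f i j)"
  proof (rule sum.cong[OF refl])
    fix j assume "j \<in> {m..N}"
    then have "{m..j} = {x. x \<in> {m..N} \<and> x \<le> j}" by auto
    then show "(\<Sum>i\<in>{x. x \<in> {m..N} \<and> x \<le> j}. f i j) = (\<Sum>i=m..j. f i j)" by simp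
  qed
  finally show ?thesis .
qed

lemma ode_zero:
  fixes w :: "real \<Rightarrow> real"
  assumes d: "\<And>t. t \<ge> 0 \<Longrightarrow> (w has_real_derivative (- c * w t)) (at t within {0..})"
    and w0: "w 0 = 0" and t: "t \<ge> 0"
  shows "w t = 0"
proof -
  define g where "g t = exp (c * t) * w t" for t
  have "(g has_real_derivative 0) (at x within {0..})" if "x \<in> {0..}" for x
  proof -
    have "(g has_real_derivative (exp (c * x) * c * w x + exp (c * x) * (- c * w x))) (at x within {0..})"
      unfolding g_def using d[of x] that by (auto intro!: derivative_eq_intros)
    then show ?thesis by (simp add: algebra_simps)
  qed
  then obtain k where "\<forall>x\<in>{0..}. g x = k" using has_field_derivative_zero_constant[of "{0..}" g] by auto
  then have "g t = g 0" using t by auto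
  then show ?thesis using w0 by (simp add: g_def)
qed

lemma deriv_within_nonneg_to:
  fixes f :: "real \<Rightarrow> real"
  assumes "(f has_real_derivative D) (at t within {0..T})" "0 \<le> t" "t < T"
  shows "(f has_real_derivative D) (at t within {0..})"
proof -
  have "at t within {0..T} = at t within {0..}"
    by (rule at_within_nhd[of t "{..<T}"]) (use assms in auto)
  then show ?thesis using assms by simp
qed

lemma F_deriv:
  fixes u :: "real \<Rightarrow> real"
  assumes cu: "continuous_on {0..} u" and t: "t \<ge> 0"
  shows "((\<lambda>t. exp (- c * t) * integral {0..t} (\<lambda>s. exp (c * s) * u s)) has_real_derivative
          (- c * (exp (- c * t) * integral {0..t} (\<lambda>s. exp (c * s) * u s)) + u t)) (at t within {0..})"
proof -
  have cont: "continuous_on {0..t+1} (\<lambda>s. exp (c * s) * u s)"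
    by (intro continuous_intros continuous_on_subset[OF cu]) auto
  have "((\<lambda>x. integral {0..x} (\<lambda>s. exp (c * s) * u s)) has_real_derivative exp (c * t) * u t) (at t within {0..t+1})"
    using integral_has_real_derivative[OF cont] t by auto
  then have I: "((\<lambda>x. integral {0..x} (\<lambda>s. exp (c * s) * u s)) has_real_derivative exp (c * t) * u t) (at t within {0..})"
    by (rule deriv_within_nonneg_to) (use t in auto)
  have "((\<lambda>t. exp (- c * t) * integral {0..t} (\<lambda>s. exp (c * s) * u s)) has_real_derivative
      (exp (- c * t) * (- c) * integral {0..t} (\<lambda>s. exp (c * s) * u s) + exp (- c * t) * (exp (c * t) * u t))) (at t within {0..})"
    by (auto intro!: derivative_eq_intros I)
  moreover have "exp (- c * t) * (exp (c * t) * u t) = u t"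
    by (simp add: mult.assoc[symmetric] exp_add[symmetric])
  ultimately show ?thesis by (simp only: algebra_simps)
qed


locale sys =
  fixes N :: nat and a b :: "nat \<Rightarrow> real" and u0 :: real
    and u :: "real \<Rightarrow> real" and v :: "nat \<Rightarrow> real \<Rightarrow> real"
  assumes N: "N \<ge> 1"
    and a_nonneg: "\<And>j. j \<in> {1..N} \<Longrightarrow> a j \<ge> 0"
    and b_pos: "\<And>j. j \<in> {1..N} \<Longrightarrow> b j > 0"
    and b_distinct: "inj_on b {1..N}"
    and u_ode: "\<And>t. t \<ge> 0 \<Longrightarrow>
       (u has_real_derivative (- (\<Sum>j=1..N. a j) * u t + b 1 * v 1 t)) (at t within {0..})"
    and v_ode: "\<And>j t. j \<in> {1..<N} \<Longrightarrow> t \<ge> 0 \<Longrightarrow>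
       (v j has_real_derivative (a j * u t - b j * v j t + b (j+1) * v (j+1) t)) (at t within {0..})"
    and vN_ode: "\<And>t. t \<ge> 0 \<Longrightarrow>
       (v N has_real_derivative (a N * u t - b N * v N t)) (at t within {0..})"
    and u_init: "u 0 = u0"
    and v_init: "\<And>j. j \<in> {1..N} \<Longrightarrow> v j 0 = 0"
begin

definition Fi :: "nat \<Rightarrow> real \<Rightarrow> real" where
  "Fi i t = exp (- b i * t) * integral {0..t} (\<lambda>s. exp (b i * s) * u s)"

definition Cc :: "nat \<Rightarrow> nat \<Rightarrow> real" where
  "Cc m i = (if m \<le> i then (1 / b m) * (\<Sum>j=i..N. a j * b i * psiS b {m..j} i) else 0)"

lemma cont_u: "continuous_on {0..} u"
  unfolding continuous_on_eq_continuous_within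
  using DERIV_continuous[OF u_ode] by auto

lemma Fi_deriv: "t \<ge> 0 \<Longrightarrow> (Fi i has_real_derivative (- b i * Fi i t + u t)) (at t within {0..})"
proof -
  assume t: "t \<ge> 0"
  have e: "Fi i = (\<lambda>t. exp (- b i * t) * integral {0..t} (\<lambda>s. exp (b i * s) * u s))"
    by (rule ext) (simp add: Fi_def)
  show ?thesis unfolding e using F_deriv[OF cont_u t, of "b i"] by (simp add: Fi_def)
qed

lemma inj_sub: "S \<subseteq> {1..N} \<Longrightarrow> inj_on b S"
  using b_distinct inj_on_subset by blast

lemma K2:
  assumes "1 \<le> m" "m < i" "i \<le> N"
  shows "Cc m i * (b m - b i) = b (Suc m) * Cc (Suc m) i"
proof -
  have bm: "b m > 0" "b (Suc m) > 0" using b_pos assms by auto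
  have ne: "b m - b i \<noteq> 0"
  proof
    assume "b m - b i = 0"
    then have "b m = b i" by simp
    then have "m = i" by (rule inj_onD[OF b_distinct]) (use assms in auto)
    then show False using assms by simp
  qed
  have ps: "psiS b {m..j} i = psiS b {Suc m..j} i * (b m / (b m - b i))" if "j \<in> {i..N}" for j
  proof -
    have "{m..j} = insert m {Suc m..j}" using that assms by auto
    then show ?thesis using psiS_insert[of "{Suc m..j}" m i b] that assms by simp
  qed
  have "Cc m i = (1 / b m) * (\<Sum>j=i..N. a j * b i * (psiS b {Suc m..j} i * (b m / (b m - b i))))"
    using assms by (simp add: Cc_def ps)
  also have "\<dots> = (1 / b m) * (\<Sum>j=i..N. (b m / (b m - b i)) * (a j * b i * psiS b {Suc m..j} i))"
    by (simp only: ac_simps)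
  also have "\<dots> = ((1 / b m) * (b m / (b m - b i))) * (\<Sum>j=i..N. a j * b i * psiS b {Suc m..j} i)"
    by (simp only: sum_distrib_left[symmetric] mult.assoc)
  also have "(1 / b m) * (b m / (b m - b i)) = 1 / (b m - b i)"
    using bm by simp
  finally have "Cc m i * (b m - b i) = (\<Sum>j=i..N. a j * b i * psiS b {Suc m..j} i)"
    using ne by simp
  also have "\<dots> = b (Suc m) * Cc (Suc m) i"
    using assms bm by (simp add: Cc_def)
  finally show ?thesis .
qed

lemma inner_sum:
  assumes "1 \<le> m" "m \<le> j" "j \<le> N"
  shows "(\<Sum>i=m..j. b i * psiS b {m..j} i) = (if j = m then b m else 0)"
proof (cases "j = m")
  case True
  then show ?thesis by (simp add: psiS_def)
next
  case False
  have "card {m..j} \<ge> 2" using False assms by simp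
  moreover have "inj_on b {m..j}" using assms by (intro inj_sub) auto
  moreover have "\<forall>k\<in>{m..j}. b k > 0" using assms b_pos by auto
  ultimately show ?thesis using psiS_sum2[of "{m..j}" b] False by simp
qed

lemma K1:
  assumes "1 \<le> m" "m \<le> N"
  shows "(\<Sum>i=m..N. Cc m i) = a m"
proof -
  have bm: "b m > 0" using b_pos assms by auto
  have "(\<Sum>i=m..N. Cc m i) = (1 / b m) * (\<Sum>i=m..N. \<Sum>j=i..N. a j * b i * psiS b {m..j} i)"
    by (simp add: Cc_def sum_distrib_left)
  also have "(\<Sum>i=m..N. \<Sum>j=i..N. a j * b i * psiS b {m..j} i) = (\<Sum>j=m..N. \<Sum>i=m..j. a j * b i * psiS b {m..j} i)"
    by (rule tri_swap)
  also have "\<dots> = (\<Sum>j=m..N. a j * (\<Sum>i=m..j. b i * psiS b {m..j} i))"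
    by (simp add: sum_distrib_left mult.assoc)
  also have "\<dots> = (\<Sum>j=m..N. (if j = m then a m * b m else 0))"
    by (rule sum.cong) (use assms inner_sum in auto)
  also have "\<dots> = a m * b m" using assms by simp
  finally show ?thesis using bm by simp
qed

end

context sys begin

lemma vstep:
  assumes m: "1 \<le> m" "m \<le> N"
    and dv: "\<And>t. t \<ge> 0 \<Longrightarrow> (v m has_real_derivative
         (a m * u t - b m * v m t + (\<Sum>i=Suc m..N. b (Suc m) * Cc (Suc m) i * Fi i t))) (at t within {0..})"
    and t: "t \<ge> 0"
  shows "v m t = (\<Sum>i=m..N. Cc m i * Fi i t)"
proof -
  define w where "w t = v m t - (\<Sum>i=m..N. Cc m i * Fi i t)" for t
  have key: "(\<Sum>i=m..N. Cc m i * (b i - b m) * Fi i t) = - (\<Sum>i=Suc m..N. b (Suc m) * Cc (Suc m) i * Fi i t)" for t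
  proof -
    have "{m..N} = insert m {Suc m..N}" using m by auto
    then have "(\<Sum>i=m..N. Cc m i * (b i - b m) * Fi i t) = (\<Sum>i=Suc m..N. Cc m i * (b i - b m) * Fi i t)"
      by simp
    also have "\<dots> = (\<Sum>i=Suc m..N. - (b (Suc m) * Cc (Suc m) i * Fi i t))"
    proof (rule sum.cong[OF refl])
      fix i assume "i \<in> {Suc m..N}"
      then have h: "Cc m i * (b m - b i) = b (Suc m) * Cc (Suc m) i" using K2 m by auto
      have "Cc m i * (b i - b m) = - (Cc m i * (b m - b i))" by (simp add: algebra_simps)
      then have "Cc m i * (b i - b m) = - (b (Suc m) * Cc (Suc m) i)" using h by simp
      then show "Cc m i * (b i - b m) * Fi i t = - (b (Suc m) * Cc (Suc m) i * Fi i t)" by simp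
    qed
    also have "\<dots> = - (\<Sum>i=Suc m..N. b (Suc m) * Cc (Suc m) i * Fi i t)" by (simp add: sum_negf)
    finally show ?thesis .
  qed
  have dw: "(w has_real_derivative (- b m * w t)) (at t within {0..})" if t: "t \<ge> 0" for t
  proof -
    have d1: "((\<lambda>t. \<Sum>i=m..N. Cc m i * Fi i t) has_real_derivative (\<Sum>i=m..N. Cc m i * (- b i * Fi i t + u t))) (at t within {0..})"
      by (rule DERIV_sum, rule DERIV_cmult, rule Fi_deriv[OF t])
    have wd: "w = (\<lambda>t. v m t - (\<Sum>i=m..N. Cc m i * Fi i t))" by (rule ext) (simp add: w_def)
    have d: "(w has_real_derivative ((a m * u t - b m * v m t + (\<Sum>i=Suc m..N. b (Suc m) * Cc (Suc m) i * Fi i t))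
        - (\<Sum>i=m..N. Cc m i * (- b i * Fi i t + u t)))) (at t within {0..})"
      unfolding wd by (rule DERIV_diff[OF dv[OF t] d1])
    have E1: "(\<Sum>i=m..N. Cc m i * (- b i * Fi i t + u t)) = (\<Sum>i=m..N. Cc m i) * u t - (\<Sum>i=m..N. Cc m i * b i * Fi i t)"
    proof -
      have "(\<Sum>i=m..N. Cc m i * (- b i * Fi i t + u t)) = (\<Sum>i=m..N. Cc m i * u t - Cc m i * b i * Fi i t)"
        by (rule sum.cong) (auto simp: algebra_simps)
      also have "\<dots> = (\<Sum>i=m..N. Cc m i * u t) - (\<Sum>i=m..N. Cc m i * b i * Fi i t)"
        by (rule sum_subtractf)
      also have "(\<Sum>i=m..N. Cc m i * u t) = (\<Sum>i=m..N. Cc m i) * u t" by (rule sum_distrib_right[symmetric])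
      finally show ?thesis .
    qed
    have E2: "(\<Sum>i=m..N. Cc m i * (b i - b m) * Fi i t) = (\<Sum>i=m..N. Cc m i * b i * Fi i t) - b m * (\<Sum>i=m..N. Cc m i * Fi i t)"
    proof -
      have "(\<Sum>i=m..N. Cc m i * (b i - b m) * Fi i t) = (\<Sum>i=m..N. Cc m i * b i * Fi i t - b m * (Cc m i * Fi i t))"
        by (rule sum.cong) (auto simp: algebra_simps)
      also have "\<dots> = (\<Sum>i=m..N. Cc m i * b i * Fi i t) - (\<Sum>i=m..N. b m * (Cc m i * Fi i t))"
        by (rule sum_subtractf)
      also have "(\<Sum>i=m..N. b m * (Cc m i * Fi i t)) = b m * (\<Sum>i=m..N. Cc m i * Fi i t)" by (rule sum_distrib_left[symmetric])
      finally show ?thesis .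
    qed
    have S2: "(\<Sum>i=m..N. Cc m i * b i * Fi i t) = b m * (\<Sum>i=m..N. Cc m i * Fi i t) - (\<Sum>i=Suc m..N. b (Suc m) * Cc (Suc m) i * Fi i t)"
      using E2 key[of t] by linarith
    have eq: "(a m * u t - b m * v m t + (\<Sum>i=Suc m..N. b (Suc m) * Cc (Suc m) i * Fi i t))
        - (\<Sum>i=m..N. Cc m i * (- b i * Fi i t + u t)) = - b m * w t"
      unfolding E1 K1[OF m] S2 w_def by (simp add: algebra_simps)
    show ?thesis using d unfolding eq .
  qed
  have "w t = 0" by (rule ode_zero[OF dw]) (use t m v_init in \<open>auto simp: w_def Fi_def\<close>)
  then show ?thesis by (simp add: w_def)
qed

lemma vrep_aux: "k < N \<Longrightarrow> \<forall>t\<ge>0. v (N - k) t = (\<Sum>i=N-k..N. Cc (N - k) i * Fi i t)"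
proof (induction k)
  case 0
  show ?case
  proof (intro allI impI)
    fix t :: real assume t: "t \<ge> 0"
    show "v (N - 0) t = (\<Sum>i=N-0..N. Cc (N - 0) i * Fi i t)"
      using vstep[of N, OF _ _ _ t] vN_ode N by simp
  qed
next
  case (Suc k)
  define m where "m = N - Suc k"
  have m: "1 \<le> m" "m < N" "Suc m = N - k" using Suc.prems by (auto simp: m_def)
  have IH: "\<forall>t\<ge>0. v (Suc m) t = (\<Sum>i=Suc m..N. Cc (Suc m) i * Fi i t)"
    using Suc.IH Suc.prems m(3) by simp
  have dv: "(v m has_real_derivative
         (a m * u t - b m * v m t + (\<Sum>i=Suc m..N. b (Suc m) * Cc (Suc m) i * Fi i t))) (at t within {0..})"
    if t: "t \<ge> 0" for t
  proof -
    have "(\<Sum>i=Suc m..N. b (Suc m) * Cc (Suc m) i * Fi i t) = b (Suc m) * v (Suc m) t"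
      using IH t by (simp add: sum_distrib_left mult.assoc)
    then show ?thesis using v_ode[of m t] m t by simp
  qed
  show ?case
    using vstep[OF m(1) _ dv] m unfolding m_def[symmetric] by simp
qed

lemma vrep: "m \<in> {1..N} \<Longrightarrow> t \<ge> 0 \<Longrightarrow> v m t = (\<Sum>i=m..N. Cc m i * Fi i t)"
  using vrep_aux[of "N - m"] by auto

end

context sys begin

lemma Kmem_shift:
  "Kmem N a b (t - s) * u s = (\<Sum>i=1..N. ((\<Sum>j=i..N. a j * b i * psiS b {1..j} i) * exp (- b i * t)) * (exp (b i * s) * u s))"
proof -
  have "Kmem N a b (t - s) = (\<Sum>j=1..N. \<Sum>i=1..j. a j * b i * psiS b {1..j} i * exp (- b i * (t - s)))"
    by (simp add: Kmem_def Kj_alt sum_distrib_left mult.assoc)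
  also have "\<dots> = (\<Sum>i=1..N. \<Sum>j=i..N. a j * b i * psiS b {1..j} i * exp (- b i * (t - s)))"
    by (rule tri_swap[symmetric])
  also have "\<dots> = (\<Sum>i=1..N. (\<Sum>j=i..N. a j * b i * psiS b {1..j} i) * exp (- b i * (t - s)))"
    by (simp add: sum_distrib_right)
  finally have "Kmem N a b (t - s) * u s = (\<Sum>i=1..N. (\<Sum>j=i..N. a j * b i * psiS b {1..j} i) * exp (- b i * (t - s)) * u s)"
    by (simp add: sum_distrib_right)
  also have "\<dots> = (\<Sum>i=1..N. ((\<Sum>j=i..N. a j * b i * psiS b {1..j} i) * exp (- b i * t)) * (exp (b i * s) * u s))"
  proof (rule sum.cong[OF refl])
    fix i
    have "exp (- b i * (t - s)) = exp (- b i * t) * exp (b i * s)"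
      by (simp add: exp_add[symmetric] algebra_simps)
    then show "(\<Sum>j=i..N. a j * b i * psiS b {1..j} i) * exp (- b i * (t - s)) * u s
      = ((\<Sum>j=i..N. a j * b i * psiS b {1..j} i) * exp (- b i * t)) * (exp (b i * s) * u s)"
      by (simp add: ac_simps)
  qed
  finally show ?thesis .
qed

lemma conv:
  assumes t: "t \<ge> 0"
  shows "integral {0..t} (\<lambda>s. Kmem N a b (t - s) * u s) = b 1 * v 1 t"
proof -
  have int: "(\<lambda>s. exp (b i * s) * u s) integrable_on {0..t}" for i
    by (intro integrable_continuous_interval continuous_intros continuous_on_subset[OF cont_u]) auto
  have "integral {0..t} (\<lambda>s. Kmem N a b (t - s) * u s)
      = integral {0..t} (\<lambda>s. \<Sum>i=1..N. ((\<Sum>j=i..N. a j * b i * psiS b {1..j} i) * exp (- b i * t)) * (exp (b i * s) * u s))"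
    by (simp only: Kmem_shift)
  also have "\<dots> = (\<Sum>i=1..N. integral {0..t} (\<lambda>s. ((\<Sum>j=i..N. a j * b i * psiS b {1..j} i) * exp (- b i * t)) * (exp (b i * s) * u s)))"
    by (rule integral_sum) (auto intro: integrable_on_mult_right int)
  also have "\<dots> = (\<Sum>i=1..N. (\<Sum>j=i..N. a j * b i * psiS b {1..j} i) * Fi i t)"
    by (rule sum.cong[OF refl]) (simp add: Fi_def mult.assoc)
  also have "\<dots> = (\<Sum>i=1..N. b 1 * (Cc 1 i * Fi i t))"
  proof (rule sum.cong[OF refl])
    fix i assume i: "i \<in> {1..N}"
    have "b 1 > 0" using b_pos N by auto
    then show "(\<Sum>j=i..N. a j * b i * psiS b {1..j} i) * Fi i t = b 1 * (Cc 1 i * Fi i t)"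
      using i by (simp add: Cc_def)
  qed
  also have "\<dots> = b 1 * v 1 t"
    using vrep[of 1 t] t N by (simp add: sum_distrib_left)
  finally show ?thesis .
qed

end

lemma dirichlet:
  fixes g s :: "nat \<Rightarrow> real"
  shows "g 0 * (s 1 * (g 1 - g 0)) + (\<Sum>j=1..n. g j * ((s j - s (Suc j)) * g 0 - s j * g j + s (Suc j) * g (Suc j)))
   = -(1/2) * ((\<Sum>j=1..n. s j * (g j - g (j - 1))^2) + (\<Sum>j=1..n. (s j - s (Suc j)) * (g j - g 0)^2))
     + s (Suc n) * (g n * g (Suc n) - g n * g 0 - (g n - g 0)^2 / 2)"
proof (induction n)
  case 0
  then show ?case by (simp add: algebra_simps power2_eq_square)
next
  case (Suc n)
  define L where "L = (\<Sum>j=1..n. g j * ((s j - s (Suc j)) * g 0 - s j * g j + s (Suc j) * g (Suc j)))"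
  define R1 where "R1 = (\<Sum>j=1..n. s j * (g j - g (j - 1))^2)"
  define R2 where "R2 = (\<Sum>j=1..n. (s j - s (Suc j)) * (g j - g 0)^2)"
  have IH: "g 0 * (s 1 * (g 1 - g 0)) + L = -(1/2) * (R1 + R2) + s (Suc n) * (g n * g (Suc n) - g n * g 0 - (g n - g 0)^2 / 2)"
    using Suc.IH unfolding L_def R1_def R2_def .
  have "g 0 * (s 1 * (g 1 - g 0)) + (\<Sum>j=1..Suc n. g j * ((s j - s (Suc j)) * g 0 - s j * g j + s (Suc j) * g (Suc j)))
     = (g 0 * (s 1 * (g 1 - g 0)) + L) + g (Suc n) * ((s (Suc n) - s (Suc (Suc n))) * g 0 - s (Suc n) * g (Suc n) + s (Suc (Suc n)) * g (Suc (Suc n)))"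
    by (simp add: L_def)
  also have "\<dots> = -(1/2) * ((R1 + s (Suc n) * (g (Suc n) - g n)^2) + (R2 + (s (Suc n) - s (Suc (Suc n))) * (g (Suc n) - g 0)^2))
     + s (Suc (Suc n)) * (g (Suc n) * g (Suc (Suc n)) - g (Suc n) * g 0 - (g (Suc n) - g 0)^2 / 2)"
    unfolding IH by (simp add: field_simps power2_eq_square)
  also have "\<dots> = -(1/2) * ((\<Sum>j=1..Suc n. s j * (g j - g (j - 1))^2) + (\<Sum>j=1..Suc n. (s j - s (Suc j)) * (g j - g 0)^2))
     + s (Suc (Suc n)) * (g (Suc n) * g (Suc (Suc n)) - g (Suc n) * g 0 - (g (Suc n) - g 0)^2 / 2)"
    by (simp add: R1_def R2_def)
  finally show ?case .
qed

lemma telescope: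
  fixes g :: "nat \<Rightarrow> real"
  shows "g j - g 0 = (\<Sum>k=1..j. g k - g (k - 1))"
proof (induction j)
  case 0 then show ?case by simp
next
  case (Suc j)
  then show ?case by simp
qed


lemma decr_lemma:
  fixes f :: "real \<Rightarrow> real"
  assumes d: "\<And>x. x \<ge> 0 \<Longrightarrow> (f has_real_derivative f' x) (at x within {0..})"
    and nonpos: "\<And>x. x \<ge> 0 \<Longrightarrow> f' x \<le> 0" and t: "t \<ge> 0"
  shows "f t \<le> f 0"
proof (rule DERIV_nonpos_imp_decreasing_open[OF t])
  fix x :: real assume x: "0 < x" "x < t"
  have "at x within {0..} = at x within UNIV"
    by (rule at_within_nhd[of x "{0<..}"]) (use x in auto)
  then have "(f has_real_derivative f' x) (at x)" using d[of x] x by simp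
  then show "\<exists>y. (f has_real_derivative y) (at x) \<and> y \<le> 0" using nonpos[of x] x by auto
next
  have "continuous_on {0..} f"
    unfolding continuous_on_eq_continuous_within using DERIV_continuous[OF d] by auto
  then show "continuous_on {0..t} f" by (rule continuous_on_subset) auto
qed

lemma shift_if_sum:
  fixes f :: "nat \<Rightarrow> real"
  assumes "N \<ge> 1"
  shows "(\<Sum>j=1..N. (if j < N then f (Suc j) else 0)) = (\<Sum>j=2..N. f j)"
proof -
  have e: "{1..N} = insert N {1..N-1}" using assms by auto
  have "(\<Sum>j\<in>insert N {1..N-1}. (if j < N then f (Suc j) else 0)) = (if N < N then f (Suc N) else 0) + (\<Sum>j\<in>{1..N-1}. (if j < N then f (Suc j) else 0))"
    by (rule sum.insert) auto
  then have "(\<Sum>j=1..N. (if j < N then f (Suc j) else 0)) = (\<Sum>j=1..N-1. (if j < N then f (Suc j) else 0))"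
    unfolding e by simp
  also have "\<dots> = (\<Sum>j=1..N-1. f (Suc j))" by (rule sum.cong) auto
  also have "\<dots> = (\<Sum>j=Suc 1..Suc (N-1). f j)" by (rule sum.shift_bounds_cl_Suc_ivl[symmetric])
  also have "{Suc 1..Suc (N-1)} = {2..N}" using assms by auto
  finally show ?thesis .
qed

context sys begin

definition vd :: "nat \<Rightarrow> real \<Rightarrow> real" where
  "vd j t = a j * u t - b j * v j t + (if j < N then b (Suc j) * v (Suc j) t else 0)"

lemma vd_deriv: "j \<in> {1..N} \<Longrightarrow> t \<ge> 0 \<Longrightarrow> (v j has_real_derivative vd j t) (at t within {0..})"
proof -
  assume j: "j \<in> {1..N}" and t: "t \<ge> 0"
  show ?thesis
  proof (cases "j < N")
    case True
    then show ?thesis using v_ode[of j t] j t by (simp add: vd_def)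
  next
    case False
    then have "j = N" using j by auto
    then show ?thesis using vN_ode[OF t] by (simp add: vd_def)
  qed
qed

lemma conservation: "t \<ge> 0 \<Longrightarrow> u t + (\<Sum>j=1..N. v j t) = u0"
proof -
  assume t: "t \<ge> 0"
  have zero: "- (\<Sum>j=1..N. a j) * u x + b 1 * v 1 x + (\<Sum>j=1..N. vd j x) = 0" for x
  proof -
    have "(\<Sum>j=1..N. vd j x) = (\<Sum>j=1..N. a j * u x) - (\<Sum>j=1..N. b j * v j x) + (\<Sum>j=1..N. (if j < N then b (Suc j) * v (Suc j) x else 0))"
      by (simp add: vd_def sum.distrib sum_subtractf)
    also have "(\<Sum>j=1..N. (if j < N then b (Suc j) * v (Suc j) x else 0)) = (\<Sum>j=2..N. b j * v j x)"
      by (rule shift_if_sum[OF N])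
    also have "(\<Sum>j=1..N. b j * v j x) = b 1 * v 1 x + (\<Sum>j=2..N. b j * v j x)"
    proof -
      have "{1..N} = insert 1 {2..N}" using N by auto
      then show ?thesis by simp
    qed
    finally show ?thesis by (simp add: sum_distrib_right)
  qed
  have D: "((\<lambda>x. u x + (\<Sum>j=1..N. v j x)) has_real_derivative 0) (at x within {0..})" if x: "x \<in> {0..}" for x
  proof -
    have "((\<lambda>x. u x + (\<Sum>j=1..N. v j x)) has_real_derivative
        (- (\<Sum>j=1..N. a j) * u x + b 1 * v 1 x + (\<Sum>j=1..N. vd j x))) (at x within {0..})"
      by (rule DERIV_add[OF u_ode DERIV_sum]) (use x vd_deriv in auto)
    then show ?thesis unfolding zero .
  qed
  then obtain k where k: "\<forall>x\<in>{0..}. u x + (\<Sum>j=1..N. v j x) = k"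
    using has_field_derivative_zero_constant[OF convex_real_interval(1) D] by blast
  have "k = u0" using k[rule_format, of 0] u_init v_init by simp
  then show ?thesis using k t by auto
qed

end

locale sysirr = sys +
  assumes aN: "a N > 0"
begin

definition sS :: "nat \<Rightarrow> real" where "sS j = (\<Sum>k=j..N. a k)"
definition pp :: "nat \<Rightarrow> real" where "pp j = sS j / b j"
definition Zc :: real where "Zc = 1 + (\<Sum>i=1..N. pp i)"
definition cc :: real where "cc = u0 / Zc"
definition gg :: "real \<Rightarrow> nat \<Rightarrow> real" where
  "gg t k = (if k = 0 then u t - cc else (v k t - cc * pp k) / pp k)"
definition VV :: "real \<Rightarrow> real" where
  "VV t = (u t - cc)^2 + (\<Sum>j=1..N. (v j t - cc * pp j)^2 / pp j)"
definition DD :: "real \<Rightarrow> real" where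
  "DD t = (\<Sum>j=1..N. sS j * (gg t j - gg t (j - 1))^2)"

lemma sS_ge: "j \<in> {1..N} \<Longrightarrow> sS j \<ge> a N"
  unfolding sS_def by (rule member_le_sum) (use a_nonneg in auto)

lemma sS_pos: "j \<in> {1..N} \<Longrightarrow> sS j > 0"
  using sS_ge aN by (meson less_le_trans)

lemma sS_Suc: "j \<le> N \<Longrightarrow> sS j = a j + sS (Suc j)"
  unfolding sS_def by (rule sum.atLeast_Suc_atMost)

lemma sS_N1: "sS (Suc N) = 0" by (simp add: sS_def)

lemma sS_N: "sS N = a N" by (simp add: sS_def)

lemma pp_pos: "j \<in> {1..N} \<Longrightarrow> pp j > 0"
  using sS_pos b_pos by (simp add: pp_def)

lemma b_pp: "j \<in> {1..N} \<Longrightarrow> b j * pp j = sS j"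
  using b_pos[of j] by (simp add: pp_def)

lemma Zc_pos: "Zc > 0"
proof -
  have "(\<Sum>i=1..N. pp i) \<ge> 0" by (rule sum_nonneg) (use pp_pos in force)
  then show ?thesis by (simp add: Zc_def)
qed

lemma sgg: "k \<in> {1..N} \<Longrightarrow> sS k * gg t k = b k * v k t - cc * sS k"
proof -
  assume k: "k \<in> {1..N}"
  have p: "pp k > 0" using pp_pos[OF k] .
  have "sS k * gg t k = b k * pp k * ((v k t - cc * pp k) / pp k)"
    using k b_pp[OF k] by (simp add: gg_def)
  also have "\<dots> = b k * (v k t - cc * pp k)" using p by simp
  also have "\<dots> = b k * v k t - cc * (b k * pp k)" by (simp add: algebra_simps)
  finally show ?thesis using b_pp[OF k] by simp
qed

lemma uprime_g: "- (\<Sum>j=1..N. a j) * u t + b 1 * v 1 t = sS 1 * (gg t 1 - gg t 0)"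
proof -
  have A: "(\<Sum>j=1..N. a j) = sS 1" by (simp add: sS_def)
  have "sS 1 * gg t 1 = b 1 * v 1 t - cc * sS 1" using sgg[of 1 t] N by auto
  then show ?thesis unfolding A by (simp add: gg_def algebra_simps)
qed

lemma vd_g: "j \<in> {1..N} \<Longrightarrow> vd j t = (sS j - sS (Suc j)) * gg t 0 - sS j * gg t j + sS (Suc j) * gg t (Suc j)"
proof -
  assume j: "j \<in> {1..N}"
  have aj: "sS j - sS (Suc j) = a j" using sS_Suc[of j] j by simp
  have sj: "sS j * gg t j = b j * v j t - cc * sS j" using sgg[OF j] .
  show ?thesis
  proof (cases "j < N")
    case True
    have sj1: "sS (Suc j) * gg t (Suc j) = b (Suc j) * v (Suc j) t - cc * sS (Suc j)"
      using sgg[of "Suc j" t] True by auto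
    show ?thesis unfolding aj sj sj1 using True aj by (simp add: vd_def gg_def algebra_simps)
  next
    case False
    then have jN: "j = N" using j by auto
    show ?thesis unfolding aj sj using jN sS_N1 sS_N by (simp add: vd_def gg_def algebra_simps)
  qed
qed

definition VVd :: "real \<Rightarrow> real" where
  "VVd t = 2 * (u t - cc) * (- (\<Sum>j=1..N. a j) * u t + b 1 * v 1 t) + (\<Sum>j=1..N. 2 * (v j t - cc * pp j) * vd j t / pp j)"

lemma VV_deriv: "t \<ge> 0 \<Longrightarrow> (VV has_real_derivative VVd t) (at t within {0..})"
proof -
  assume t: "t \<ge> 0"
  have d1: "((\<lambda>t. (u t - cc)^2) has_real_derivative 2 * (u t - cc) * (- (\<Sum>j=1..N. a j) * u t + b 1 * v 1 t)) (at t within {0..})"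
    using u_ode[OF t] by (auto intro!: derivative_eq_intros)
  have d2: "((\<lambda>t. \<Sum>j=1..N. (v j t - cc * pp j)^2 / pp j) has_real_derivative (\<Sum>j=1..N. 2 * (v j t - cc * pp j) * vd j t / pp j)) (at t within {0..})"
  proof (rule DERIV_sum)
    fix j assume j: "j \<in> {1..N}"
    show "((\<lambda>t. (v j t - cc * pp j)^2 / pp j) has_real_derivative 2 * (v j t - cc * pp j) * vd j t / pp j) (at t within {0..})"
      using vd_deriv[OF j t] pp_pos[OF j] by (auto intro!: derivative_eq_intros)
  qed
  have e: "VV = (\<lambda>t. (u t - cc)^2 + (\<Sum>j=1..N. (v j t - cc * pp j)^2 / pp j))"
    by (rule ext) (simp add: VV_def)
  show ?thesis unfolding e VVd_def by (rule DERIV_add[OF d1 d2])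
qed

lemma VVd_le: "t \<ge> 0 \<Longrightarrow> VVd t \<le> - DD t"
proof -
  assume t: "t \<ge> 0"
  have e1: "2 * (u t - cc) * (- (\<Sum>j=1..N. a j) * u t + b 1 * v 1 t) = 2 * (gg t 0 * (sS 1 * (gg t 1 - gg t 0)))"
    unfolding uprime_g by (simp add: gg_def)
  have e2: "(\<Sum>j=1..N. 2 * (v j t - cc * pp j) * vd j t / pp j)
     = 2 * (\<Sum>j=1..N. gg t j * ((sS j - sS (Suc j)) * gg t 0 - sS j * gg t j + sS (Suc j) * gg t (Suc j)))"
    unfolding sum_distrib_left
  proof (rule sum.cong[OF refl])
    fix j assume j: "j \<in> {1..N}"
    have "2 * (v j t - cc * pp j) * vd j t / pp j = 2 * (gg t j * vd j t)"
      using j by (simp add: gg_def)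
    then show "2 * (v j t - cc * pp j) * vd j t / pp j = 2 * (gg t j * ((sS j - sS (Suc j)) * gg t 0 - sS j * gg t j + sS (Suc j) * gg t (Suc j)))"
      using vd_g[OF j, of t] by simp
  qed
  have R2: "(\<Sum>j=1..N. (sS j - sS (Suc j)) * (gg t j - gg t 0)^2) \<ge> 0"
  proof (rule sum_nonneg)
    fix j assume j: "j \<in> {1..N}"
    have "sS j - sS (Suc j) = a j" using sS_Suc[of j] j by simp
    then show "(sS j - sS (Suc j)) * (gg t j - gg t 0)^2 \<ge> 0" using a_nonneg[OF j] by simp
  qed
  have "VVd t = 2 * (gg t 0 * (sS 1 * (gg t 1 - gg t 0)) + (\<Sum>j=1..N. gg t j * ((sS j - sS (Suc j)) * gg t 0 - sS j * gg t j + sS (Suc j) * gg t (Suc j))))"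
    unfolding VVd_def e1 e2 by simp
  also have "\<dots> = - (DD t + (\<Sum>j=1..N. (sS j - sS (Suc j)) * (gg t j - gg t 0)^2))"
    unfolding dirichlet sS_N1 DD_def by (simp add: field_simps)
  finally show ?thesis using R2 by simp
qed

definition PP :: real where "PP = (\<Sum>j=1..N. pp j)"

lemma PP_pos: "PP > 0"
proof -
  have "pp N \<le> PP" unfolding PP_def by (rule member_le_sum) (use N pp_pos in \<open>auto intro: less_imp_le\<close>)
  then show ?thesis using pp_pos[of N] N by auto
qed

lemma ppgg: "j \<in> {1..N} \<Longrightarrow> pp j * gg t j = v j t - cc * pp j"
  using pp_pos[of j] by (simp add: gg_def)

lemma VV_g: "VV t = (gg t 0)^2 + (\<Sum>j=1..N. pp j * (gg t j)^2)"
proof -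
  have "(\<Sum>j=1..N. (v j t - cc * pp j)^2 / pp j) = (\<Sum>j=1..N. pp j * (gg t j)^2)"
  proof (rule sum.cong[OF refl])
    fix j assume j: "j \<in> {1..N}"
    have p: "pp j \<noteq> 0" using pp_pos[OF j] by simp
    show "(v j t - cc * pp j)^2 / pp j = pp j * (gg t j)^2"
      using p j by (simp add: gg_def power2_eq_square field_simps)
  qed
  then show ?thesis by (simp add: VV_def gg_def)
qed

lemma cons_g: "t \<ge> 0 \<Longrightarrow> gg t 0 + (\<Sum>j=1..N. pp j * gg t j) = 0"
proof -
  assume t: "t \<ge> 0"
  have "(\<Sum>j=1..N. pp j * gg t j) = (\<Sum>j=1..N. v j t - cc * pp j)"
    by (rule sum.cong) (auto simp: ppgg)
  also have "\<dots> = (\<Sum>j=1..N. v j t) - cc * PP" by (simp add: sum_subtractf sum_distrib_left PP_def)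
  finally have "gg t 0 + (\<Sum>j=1..N. pp j * gg t j) = (u t + (\<Sum>j=1..N. v j t)) - cc * (1 + PP)"
    by (simp add: gg_def algebra_simps)
  also have "\<dots> = u0 - cc * Zc" using conservation[OF t] by (simp add: Zc_def PP_def)
  also have "\<dots> = 0" using Zc_pos by (simp add: cc_def)
  finally show ?thesis .
qed

lemma expand_sq: "(\<Sum>j=1..N. pp j * (gg t j - gg t 0)^2)
   = (\<Sum>j=1..N. pp j * (gg t j)^2) - 2 * gg t 0 * (\<Sum>j=1..N. pp j * gg t j) + (gg t 0)^2 * PP"
proof -
  have "(\<Sum>j=1..N. pp j * (gg t j - gg t 0)^2)
     = (\<Sum>j=1..N. pp j * (gg t j)^2 - (2 * gg t 0) * (pp j * gg t j) + (gg t 0)^2 * pp j)"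
    by (rule sum.cong) (auto simp: power2_eq_square algebra_simps)
  also have "\<dots> = (\<Sum>j=1..N. pp j * (gg t j)^2) - (\<Sum>j=1..N. (2 * gg t 0) * (pp j * gg t j)) + (\<Sum>j=1..N. (gg t 0)^2 * pp j)"
    by (simp add: sum.distrib sum_subtractf)
  also have "\<dots> = (\<Sum>j=1..N. pp j * (gg t j)^2) - 2 * gg t 0 * (\<Sum>j=1..N. pp j * gg t j) + (gg t 0)^2 * PP"
    by (simp add: sum_distrib_left PP_def)
  finally show ?thesis .
qed

definition QQ :: "real \<Rightarrow> real" where "QQ t = (\<Sum>k=1..N. (gg t k - gg t (k - 1))^2)"

lemma QQ_nonneg: "QQ t \<ge> 0" unfolding QQ_def by (rule sum_nonneg) simp

lemma diff_bound: "j \<in> {1..N} \<Longrightarrow> (gg t j - gg t 0)^2 \<le> real N * QQ t"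
proof -
  assume j: "j \<in> {1..N}"
  have "(gg t j - gg t 0)^2 = (\<Sum>k=1..j. gg t k - gg t (k - 1))^2" using telescope[of "gg t" j] by simp
  also have "\<dots> \<le> (\<Sum>k=1..j. (gg t k - gg t (k - 1))^2) * card {1..j}"
    by (rule sum_squared_le_sum_of_squares)
  also have "\<dots> \<le> QQ t * real N"
  proof (rule mult_mono)
    show "(\<Sum>k=1..j. (gg t k - gg t (k - 1))^2) \<le> QQ t"
      unfolding QQ_def by (rule sum_mono2) (use j in auto)
    show "real (card {1..j}) \<le> real N" using j by simp
    show "0 \<le> QQ t" by (rule QQ_nonneg)
    show "0 \<le> real (card {1..j})" by simp
  qed
  finally show ?thesis by (simp add: mult.commute)
qed

lemma QQ_DD: "a N * QQ t \<le> DD t"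
  unfolding QQ_def DD_def sum_distrib_left
  by (rule sum_mono) (use sS_ge in \<open>auto intro!: mult_right_mono\<close>)

definition Cp :: real where "Cp = real N * PP / a N"

lemma Cp_pos: "Cp > 0" using N PP_pos aN by (simp add: Cp_def)

lemma poincare: "t \<ge> 0 \<Longrightarrow> VV t \<le> Cp * DD t"
proof -
  assume t: "t \<ge> 0"
  have "VV t \<le> (\<Sum>j=1..N. pp j * (gg t j - gg t 0)^2)"
  proof -
    have c: "(\<Sum>j=1..N. pp j * gg t j) = - gg t 0" using cons_g[OF t] by linarith
    have "(\<Sum>j=1..N. pp j * (gg t j - gg t 0)^2) = VV t + (gg t 0)^2 + (gg t 0)^2 * PP"
      unfolding expand_sq c VV_g by (simp add: power2_eq_square)
    moreover have "(gg t 0)^2 * PP \<ge> 0" using PP_pos by simp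
    ultimately show ?thesis by simp
  qed
  also have "\<dots> \<le> (\<Sum>j=1..N. pp j * (real N * QQ t))"
    by (rule sum_mono) (use pp_pos diff_bound in \<open>auto intro!: mult_left_mono less_imp_le\<close>)
  also have "\<dots> = PP * (real N * QQ t)" unfolding PP_def by (rule sum_distrib_right[symmetric])
  also have "\<dots> = (real N * QQ t) * PP" by (simp add: mult.commute)
  also have "\<dots> = real N * PP * QQ t" by (simp add: mult_ac)
  also have "\<dots> \<le> real N * PP * (DD t / a N)"
  proof (rule mult_left_mono)
    show "QQ t \<le> DD t / a N" using QQ_DD[of t] aN by (simp add: field_simps)
    show "0 \<le> real N * PP" using PP_pos by simp
  qed
  also have "\<dots> = Cp * DD t" by (simp add: Cp_def)
  finally show ?thesis .
qed

end

lemma expdec: "c > 0 \<Longrightarrow> ((\<lambda>t::real. exp (- t / c)) \<longlongrightarrow> 0) at_top" by real_asymp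

context sysirr begin

lemma VV_sq: "(u t - cc)^2 \<le> VV t"
proof -
  have "(\<Sum>j=1..N. (v j t - cc * pp j)^2 / pp j) \<ge> 0"
    by (rule sum_nonneg) (use pp_pos in \<open>auto intro: divide_nonneg_pos\<close>)
  then show ?thesis by (simp add: VV_def)
qed

lemma decay: "t \<ge> 0 \<Longrightarrow> VV t \<le> VV 0 * exp (- t / Cp)"
proof -
  assume t: "t \<ge> 0"
  define h where "h x = VV x * exp (x / Cp)" for x
  have hd: "(h has_real_derivative (VVd x * exp (x / Cp) + VV x * (exp (x / Cp) * (1 / Cp)))) (at x within {0..})"
    if x: "x \<ge> 0" for x
    unfolding h_def using VV_deriv[OF x] Cp_pos by (auto intro!: derivative_eq_intros)
  have "h t \<le> h 0"
  proof (rule decr_lemma[OF hd _ t])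
    fix x :: real assume x: "x \<ge> 0"
    have "VV x / Cp \<le> DD x" using poincare[OF x] Cp_pos by (simp add: field_simps mult.commute)
    then have "VVd x + VV x / Cp \<le> 0" using VVd_le[OF x] by simp
    then have "exp (x / Cp) * (VVd x + VV x / Cp) \<le> 0" by (simp add: mult_nonpos_nonneg mult_le_0_iff)
    then show "VVd x * exp (x / Cp) + VV x * (exp (x / Cp) * (1 / Cp)) \<le> 0"
      by (simp add: algebra_simps)
  qed
  then have "VV t * exp (t / Cp) \<le> VV 0" by (simp add: h_def)
  then have "VV t * exp (t / Cp) * exp (- t / Cp) \<le> VV 0 * exp (- t / Cp)"
    by (rule mult_right_mono) simp
  moreover have "VV t * exp (t / Cp) * exp (- t / Cp) = VV t"
  proof -
    have "exp (t / Cp) * exp (- t / Cp) = 1" by (simp add: exp_add[symmetric])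
    then show ?thesis by (simp only: mult.assoc)
  qed
  ultimately show ?thesis by linarith
qed

lemma u_limit: "(u \<longlongrightarrow> cc) at_top"
proof -
  have lim0: "((\<lambda>t. VV 0 * exp (- t / Cp)) \<longlongrightarrow> 0) at_top"
  proof -
    have "((\<lambda>t. exp (- t / Cp)) \<longlongrightarrow> 0) at_top"
      using Cp_pos by (rule expdec)
    then show ?thesis using tendsto_mult_left[of _ 0 at_top "VV 0"] by simp
  qed
  have ev: "\<forall>\<^sub>F t in at_top. norm ((u t - cc)^2) \<le> VV 0 * exp (- t / Cp)"
    using eventually_ge_at_top[of "0::real"]
  proof eventually_elim
    case (elim t)
    show ?case using VV_sq[of t] decay[OF elim] by simp
  qed
  have "((\<lambda>t. (u t - cc)^2) \<longlongrightarrow> 0) at_top"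
    by (rule Lim_null_comparison[OF ev lim0])
  then have "((\<lambda>t. sqrt ((u t - cc)^2)) \<longlongrightarrow> sqrt 0) at_top"
    by (rule tendsto_real_sqrt)
  then have "((\<lambda>t. \<bar>u t - cc\<bar>) \<longlongrightarrow> 0) at_top" by simp
  then have "((\<lambda>t. u t - cc) \<longlongrightarrow> 0) at_top" by (simp add: tendsto_rabs_zero_iff)
  then show ?thesis by (rule LIM_zero_cancel)
qed

end

lemma sum_tail_zero:
  fixes f :: "nat \<Rightarrow> real"
  assumes "J \<le> N" "\<And>j. J < j \<Longrightarrow> j \<le> N \<Longrightarrow> f j = 0"
  shows "(\<Sum>j=m..N. f j) = (\<Sum>j=m..J. f j)"
  by (rule sum.mono_neutral_right) (use assms in auto)

context sys begin

lemma vzero: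
  assumes J: "J \<le> N" and az: "\<And>j. J < j \<Longrightarrow> j \<le> N \<Longrightarrow> a j = 0"
  shows "k < N - J \<Longrightarrow> \<forall>t\<ge>0. v (N - k) t = 0"
proof (induction k)
  case 0
  have aN: "a N = 0" using az[of N] 0 by auto
  show ?case
  proof (intro allI impI)
    fix t :: real assume t: "t \<ge> 0"
    have "v N t = 0"
    proof (rule ode_zero[of "v N" "b N"])
      fix x :: real assume x: "x \<ge> 0"
      show "(v N has_real_derivative - b N * v N x) (at x within {0..})" using vN_ode[OF x] aN by simp
    qed (use t v_init N in auto)
    then show "v (N - 0) t = 0" by simp
  qed
next
  case (Suc k)
  define j where "j = N - Suc k"
  have j: "j \<in> {1..<N}" "Suc j = N - k" "J < j" using Suc.prems J by (auto simp: j_def)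
  have aj: "a j = 0" using az[of j] j by auto
  have IH: "\<forall>t\<ge>0. v (Suc j) t = 0" using Suc.IH Suc.prems j(2) by simp
  show ?case
  proof (intro allI impI)
    fix t :: real assume t: "t \<ge> 0"
    have "v j t = 0"
    proof (rule ode_zero[of "v j" "b j"])
      fix x :: real assume x: "x \<ge> 0"
      show "(v j has_real_derivative - b j * v j x) (at x within {0..})" using v_ode[OF j(1) x] aj IH x by simp
    qed (use t v_init j in auto)
    then show "v (N - Suc k) t = 0" by (simp add: j_def)
  qed
qed

lemma vzero':
  assumes J: "J \<le> N" and az: "\<And>j. J < j \<Longrightarrow> j \<le> N \<Longrightarrow> a j = 0"
    and j: "J < j" "j \<le> N" and t: "t \<ge> 0"
  shows "v j t = 0"
  using vzero[OF J az, of "N - j"] j t by auto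

lemma limit_main: "(u \<longlongrightarrow> u0 / (1 + (\<Sum>i=1..N. (1 / b i) * (\<Sum>j=i..N. a j)))) at_top"
proof (cases "\<exists>j\<in>{1..N}. a j > 0")
  case False
  have az: "\<And>j. 0 < j \<Longrightarrow> j \<le> N \<Longrightarrow> a j = 0"
  proof -
    fix j :: nat assume j: "0 < j" "j \<le> N"
    then have "j \<in> {1..N}" by auto
    then have "\<not> a j > 0" "a j \<ge> 0" using False a_nonneg by auto
    then show "a j = 0" by simp
  qed
  have A: "(\<Sum>j=1..N. a j) = 0" using az by simp
  have Z: "(\<Sum>i=1..N. (1 / b i) * (\<Sum>j=i..N. a j)) = 0"
    by (rule sum.neutral) (use az in \<open>auto intro!: sum.neutral\<close>)
  have D: "(u has_real_derivative 0) (at x within {0..})" if x: "x \<in> {0..}" for x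
    using u_ode[of x] x A vzero'[of 0 1 x] az N by simp
  obtain k where k: "\<forall>x\<in>{0..}. u x = k"
    using has_field_derivative_zero_constant[OF convex_real_interval(1) D] by blast
  have ku: "k = u0" using k u_init by auto
  have ev: "\<forall>\<^sub>F t in at_top. u0 = u t"
    using eventually_ge_at_top[of "0::real"]
  proof eventually_elim
    case (elim t) then show ?case using k ku by auto
  qed
  have "(u \<longlongrightarrow> u0) at_top" by (rule Lim_transform_eventually[OF tendsto_const ev])
  then show ?thesis using Z by simp
next
  case True
  define J where "J = Max {j\<in>{1..N}. a j > 0}"
  have fin: "finite {j\<in>{1..N}. a j > 0}" by simp
  have ne: "{j\<in>{1..N}. a j > 0} \<noteq> {}" using True by auto
  have Jin: "J \<in> {j\<in>{1..N}. a j > 0}" unfolding J_def using Max_in[OF fin ne] .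
  then have J: "1 \<le> J" "J \<le> N" "a J > 0" by auto
  have az: "\<And>j. J < j \<Longrightarrow> j \<le> N \<Longrightarrow> a j = 0"
  proof -
    fix j assume j: "J < j" "j \<le> N"
    show "a j = 0"
    proof (rule ccontr)
      assume "a j \<noteq> 0"
      then have "a j > 0" using a_nonneg[of j] j J by auto
      then have "j \<le> J" unfolding J_def using fin j J by (intro Max_ge) auto
      then show False using j by simp
    qed
  qed
  have sumA: "(\<Sum>j=1..N. a j) = (\<Sum>j=1..J. a j)" by (rule sum_tail_zero[OF J(2) az])
  interpret I: sysirr J a b u0 u v
  proof unfold_locales
    show "1 \<le> J" by (rule J(1))
    show "\<And>j. j \<in> {1..J} \<Longrightarrow> 0 \<le> a j" using a_nonneg J by auto
    show "\<And>j. j \<in> {1..J} \<Longrightarrow> 0 < b j" using b_pos J by auto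
    show "inj_on b {1..J}" using J by (intro inj_sub) auto
    show "\<And>t. 0 \<le> t \<Longrightarrow> (u has_real_derivative - (\<Sum>j=1..J. a j) * u t + b 1 * v 1 t) (at t within {0..})"
      using u_ode sumA by simp
    show "\<And>j t. j \<in> {1..<J} \<Longrightarrow> 0 \<le> t \<Longrightarrow>
       (v j has_real_derivative a j * u t - b j * v j t + b (j + 1) * v (j + 1) t) (at t within {0..})"
      using v_ode J by auto
    show "\<And>t. 0 \<le> t \<Longrightarrow> (v J has_real_derivative a J * u t - b J * v J t) (at t within {0..})"
    proof -
      fix t :: real assume t: "0 \<le> t"
      show "(v J has_real_derivative a J * u t - b J * v J t) (at t within {0..})"
      proof (cases "J < N")
        case True
        have "v (J + 1) t = 0" using vzero'[OF J(2) az, of "J+1" t] True t by simp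
        then show ?thesis using v_ode[of J t] True J t by simp
      next
        case False
        then have "J = N" using J by simp
        then show ?thesis using vN_ode[OF t] by simp
      qed
    qed
    show "u 0 = u0" by (rule u_init)
    show "\<And>j. j \<in> {1..J} \<Longrightarrow> v j 0 = 0" using v_init J by auto
    show "0 < a J" by (rule J(3))
  qed
  have "(\<Sum>i=1..N. (1 / b i) * (\<Sum>j=i..N. a j)) = (\<Sum>i=1..J. (1 / b i) * (\<Sum>j=i..N. a j))"
  proof (rule sum_tail_zero[OF J(2)])
    fix i assume i: "J < i" "i \<le> N"
    have "(\<Sum>j=i..N. a j) = 0" by (rule sum.neutral) (use i az in auto)
    then show "(1 / b i) * (\<Sum>j=i..N. a j) = 0" by simp
  qed
  also have "\<dots> = (\<Sum>i=1..J. I.pp i)"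
  proof (rule sum.cong[OF refl])
    fix i assume i: "i \<in> {1..J}"
    have "(\<Sum>j=i..N. a j) = (\<Sum>j=i..J. a j)" by (rule sum_tail_zero[OF J(2) az])
    then show "(1 / b i) * (\<Sum>j=i..N. a j) = I.pp i" by (simp add: I.pp_def I.sS_def)
  qed
  finally have "u0 / (1 + (\<Sum>i=1..N. (1 / b i) * (\<Sum>j=i..N. a j))) = I.cc"
    by (simp add: I.cc_def I.Zc_def)
  then show ?thesis using I.u_limit by simp
qed

end

theorem theorem3p1:
  fixes N :: nat and a b :: "nat \<Rightarrow> real" and u0 :: real
    and u :: "real \<Rightarrow> real" and v :: "nat \<Rightarrow> real \<Rightarrow> real"
  assumes N: "N \<ge> 1"
    and a_nonneg: "\<And>j. j \<in> {1..N} \<Longrightarrow> a j \<ge> 0"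
    and b_pos: "\<And>j. j \<in> {1..N} \<Longrightarrow> b j > 0"
    and b_distinct: "inj_on b {1..N}"
    and u_ode: "\<And>t. t \<ge> 0 \<Longrightarrow>
       (u has_real_derivative (- (\<Sum>j=1..N. a j) * u t + b 1 * v 1 t)) (at t within {0..})"
    and v_ode: "\<And>j t. j \<in> {1..<N} \<Longrightarrow> t \<ge> 0 \<Longrightarrow>
       (v j has_real_derivative (a j * u t - b j * v j t + b (j+1) * v (j+1) t)) (at t within {0..})"
    and vN_ode: "\<And>t. t \<ge> 0 \<Longrightarrow>
       (v N has_real_derivative (a N * u t - b N * v N t)) (at t within {0..})"
    and u_init: "u 0 = u0"
    and v_init: "\<And>j. j \<in> {1..N} \<Longrightarrow> v j 0 = 0"
  shows "(\<forall>t\<ge>0. (u has_real_derivative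
              (- (\<Sum>j=1..N. a j) * u t + integral {0..t} (\<lambda>s. Kmem N a b (t - s) * u s)))
              (at t within {0..}))
       \<and> u 0 = u0
       \<and> (\<lambda>t. exp (- 0 * t) * Kmem N a b t) integrable_on {0..}
       \<and> (\<Sum>j=1..N. a j) = laplace (Kmem N a b) 0
       \<and> (\<forall>j\<in>{1..N}. \<forall>t\<ge>0. Kj b j t \<ge> 0)
       \<and> (\<forall>t\<ge>0. Kmem N a b t \<ge> 0)
       \<and> (u \<longlongrightarrow> u0 / (1 + (\<Sum>i=1..N. (1 / b i) * (\<Sum>j=i..N. a j)))) at_top"
proof -
  interpret S: sys N a b u0 u v by (rule sys.intro[OF assms])
  have bp: "\<forall>k\<in>{1..N}. b k > 0" using b_pos by auto
  have int: "(Kmem N a b has_integral (\<Sum>j=1..N. a j)) {0..}"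
    by (rule Kmem_integral[OF b_distinct bp])
  have e0: "(\<lambda>t. exp (- 0 * t) * Kmem N a b t) = Kmem N a b" by (rule ext) simp
  have c1: "\<forall>t\<ge>0. (u has_real_derivative
              (- (\<Sum>j=1..N. a j) * u t + integral {0..t} (\<lambda>s. Kmem N a b (t - s) * u s)))
              (at t within {0..})"
    using u_ode S.conv by simp
  have c3: "(\<lambda>t. exp (- 0 * t) * Kmem N a b t) integrable_on {0..}"
    unfolding e0 using int by blast
  have c4: "(\<Sum>j=1..N. a j) = laplace (Kmem N a b) 0"
    unfolding laplace_def e0 using int by (simp add: integral_unique)
  have c5: "\<forall>j\<in>{1..N}. \<forall>t\<ge>0. Kj b j t \<ge> 0"
  proof (intro ballI allI impI)
    fix j t assume j: "j \<in> {1..N}" and t: "(t::real) \<ge> 0"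
    show "Kj b j t \<ge> 0"
      by (rule Kj_nonneg) (use j t b_pos in \<open>auto intro: S.inj_sub\<close>)
  qed
  have c6: "\<forall>t\<ge>0. Kmem N a b t \<ge> 0"
  proof (intro allI impI)
    fix t :: real assume t: "t \<ge> 0"
    show "Kmem N a b t \<ge> 0" unfolding Kmem_def
      by (rule sum_nonneg) (use c5 t a_nonneg in \<open>auto intro!: mult_nonneg_nonneg\<close>)
  qed
  show ?thesis using c1 u_init c3 c4 c5 c6 S.limit_main by blast
qed


end
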